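(* The Petersen graph is $4$-ordered.
   Context: A simple graph $G$ is called $k$-ordered if for every sequence $v_1,\ldots,v_k$ of $k$ distinct vertices of $G$ there exists a cycle in $G$ containing these $k$ vertices in the specified (cyclic) order. The Petersen graph is the $3$-regular graph on $10$ vertices consisting of an outer $5$-cycle $B_1B_2B_3B_4B_5$, an inner "pentagram" on $A_1,\ldots,A_5$ with $A_i$ adjacent to $A_{i\pm 2 \bmod 5}$, and the edges $A_iB_i$ for $i=1,\ldots,5$. *)

theory Defs
  imports Main "HOL-Library.Sublist"
begin

definition is_cycle :: "'a set \<Rightarrow> ('a \<Rightarrow> 'a \<Rightarrow> bool) \<Rightarrow> 'a list \<Rightarrow> bool" where
  "is_cycle V E c \<longleftrightarrow> length c \<ge> 3 \<and> distinct c \<and> set c \<subseteq> V \<and>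
     (\<forall>i < length c. E (c ! i) (c ! ((i + 1) mod length c)))"

definition in_cyclic_order :: "'a list \<Rightarrow> 'a list \<Rightarrow> bool" where
  "in_cyclic_order vs c \<longleftrightarrow> (\<exists>r < length c. subseq vs (rotate r c))"

definition k_ordered :: "nat \<Rightarrow> 'a set \<Rightarrow> ('a \<Rightarrow> 'a \<Rightarrow> bool) \<Rightarrow> bool" where
  "k_ordered k V E \<longleftrightarrow>
     (\<forall>vs. length vs = k \<and> distinct vs \<and> set vs \<subseteq> V \<longrightarrow>
        (\<exists>c. is_cycle V E c \<and> in_cyclic_order vs c))"

(* Petersen graph. Vertex (True, i) is B_(i+1) (outer 5-cycle),
   vertex (False, i) is A_(i+1) (inner pentagram), i = 0..4. *)
definition petersen_V :: "(bool \<times> nat) set" where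
  "petersen_V = {(b, i). i < 5}"

definition petersen_E0 :: "bool \<times> nat \<Rightarrow> bool \<times> nat \<Rightarrow> bool" where
  "petersen_E0 u v \<longleftrightarrow> (case (u, v) of
      ((True, i), (True, j)) \<Rightarrow> i < 5 \<and> j = (i + 1) mod 5
    | ((False, i), (False, j)) \<Rightarrow> i < 5 \<and> j = (i + 2) mod 5
    | ((False, i), (True, j)) \<Rightarrow> i < 5 \<and> j = i
    | _ \<Rightarrow> False)"

definition petersen_E :: "bool \<times> nat \<Rightarrow> bool \<times> nat \<Rightarrow> bool" where
  "petersen_E u v \<longleftrightarrow> petersen_E0 u v \<or> petersen_E0 v u"

end

theory Submission
  imports Defs
begin

fun sq :: "'a list \<Rightarrow> 'a list \<Rightarrow> bool" where
  "sq [] ys = True"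
| "sq (x#xs) [] = False"
| "sq (x#xs) (y#ys) = (if x = y then sq xs ys else sq (x#xs) ys)"

lemma sq_subseq: "sq xs ys \<Longrightarrow> subseq xs ys"
  by (induction xs ys rule: sq.induct) (auto split: if_splits)

definition Vl :: "(bool \<times> nat) list" where
  "Vl = [(True,0),(True,1),(True,2),(True,3),(True,4),(False,0),(False,1),(False,2),(False,3),(False,4)]"

definition W :: "(bool \<times> nat) list list" where
  "W = [[(True,0),(True,1),(True,2),(True,3),(True,4),(False,4),(False,1),(False,3),(False,0)],
 [(True,0),(True,4),(True,3),(True,2),(False,2),(False,0),(False,3),(False,1),(True,1)],
 [(True,0),(False,0),(False,3),(False,1),(False,4),(False,2),(True,2),(True,3),(True,4)],
 [(True,0),(True,1),(False,1),(False,3),(True,3),(True,2),(False,2),(False,4),(True,4)],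
 [(True,0),(False,0),(False,2),(False,4),(False,1),(False,3),(True,3),(True,2),(True,1)],
 [(True,0),(True,4),(True,3),(True,2),(True,1),(False,1),(False,4),(False,2),(False,0)],
 [(True,0),(True,4),(False,4),(False,1),(True,1),(True,2),(True,3),(False,3),(False,0)],
 [(True,0),(False,0),(False,2),(True,2),(True,3),(False,3),(False,1),(False,4),(True,4)],
 [(True,0),(True,4),(False,4),(False,1),(False,3),(False,0),(False,2),(True,2),(True,1)],
 [(True,0),(True,1),(False,1),(False,4),(False,2),(False,0),(False,3),(True,3),(True,4)],
 [(True,0),(False,0),(False,3),(True,3),(True,4),(False,4),(False,2),(True,2),(True,1)],
 [(True,0),(True,1),(False,1),(False,4),(True,4),(True,3),(True,2),(False,2),(False,0)],
 [(True,0),(True,1),(True,2),(True,3),(False,3),(False,0),(False,2),(False,4),(True,4)],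
 [(True,0),(False,0),(False,2),(True,2),(True,1),(False,1),(False,3),(True,3),(True,4)],
 [(True,0),(False,0),(False,2),(False,4),(True,4),(True,3),(False,3),(False,1),(True,1)],
 [(True,0),(False,0),(False,3),(False,1),(True,1),(True,2),(False,2),(False,4),(True,4)],
 [(True,0),(True,1),(True,2),(False,2),(False,4),(True,4),(True,3),(False,3),(False,0)],
 [(True,0),(True,4),(True,3),(False,3),(False,1),(True,1),(True,2),(False,2),(False,0)],
 [(True,0),(True,4),(True,3),(False,3),(False,0),(False,2),(False,4),(False,1),(True,1)],
 [(True,0),(True,4),(False,4),(False,2),(True,2),(True,1),(False,1),(False,3),(False,0)],
 [(True,0),(True,1),(True,2),(False,2),(False,0),(False,3),(False,1),(False,4),(True,4)],
 [(True,0),(True,1),(False,1),(False,3),(True,3),(True,4),(False,4),(False,2),(False,0)],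
 [(True,0),(True,4),(False,4),(False,2),(False,0),(False,3),(True,3),(True,2),(True,1)],
 [(True,0),(False,0),(False,2),(True,2),(True,3),(True,4),(False,4),(False,1),(True,1)],
 [(True,0),(False,0),(False,3),(True,3),(True,2),(True,1),(False,1),(False,4),(True,4)],
 [(True,0),(True,1),(False,1),(False,3),(False,0),(False,2),(True,2),(True,3),(True,4)],
 [(True,0),(False,0),(False,2),(False,4),(False,1),(True,1),(True,2),(True,3),(True,4)],
 [(True,0),(False,0),(False,3),(False,1),(False,4),(True,4),(True,3),(True,2),(True,1)],
 [(True,0),(True,1),(True,2),(True,3),(True,4),(False,4),(False,2),(False,0)],
 [(True,0),(True,1),(True,2),(False,2),(False,0),(False,3),(True,3),(True,4)],
 [(True,0),(True,1),(False,1),(False,3),(False,0),(False,2),(False,4),(True,4)],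
 [(True,0),(True,1),(False,1),(False,4),(True,4),(True,3),(False,3),(False,0)],
 [(True,0),(True,4),(True,3),(True,2),(True,1),(False,1),(False,3),(False,0)],
 [(True,0),(True,4),(True,3),(False,3),(False,0),(False,2),(True,2),(True,1)],
 [(True,0),(True,4),(False,4),(False,1),(True,1),(True,2),(False,2),(False,0)],
 [(True,0),(True,4),(False,4),(False,2),(False,0),(False,3),(False,1),(True,1)],
 [(True,0),(False,0),(False,2),(True,2),(True,1),(False,1),(False,4),(True,4)],
 [(True,0),(False,0),(False,2),(False,4),(True,4),(True,3),(True,2),(True,1)],
 [(True,0),(False,0),(False,3),(True,3),(True,4),(False,4),(False,1),(True,1)],
 [(True,0),(False,0),(False,3),(False,1),(True,1),(True,2),(True,3),(True,4)]]"

lemma comp_cover: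
  "\<forall>x\<in>set Vl. \<forall>y\<in>set Vl. \<forall>z\<in>set Vl. distinct [(True,0),x,y,z] \<longrightarrow> (\<exists>c\<in>set W. sq [(True,0),x,y,z] c)"
  unfolding Vl_def W_def by code_simp

lemma Vl_eq: "set Vl = petersen_V"
  unfolding Vl_def petersen_V_def
  by (auto simp: less_Suc_eq numeral_eq_Suc)

lemma E_V: "petersen_E u v \<Longrightarrow> u \<in> petersen_V \<and> v \<in> petersen_V"
  unfolding petersen_E_def petersen_E0_def petersen_V_def
  by (cases u; cases v) (auto split: bool.splits)

lemma W_cyc: "\<forall>c\<in>set W. is_cycle petersen_V petersen_E c"
  unfolding is_cycle_def Vl_eq[symmetric] W_def Vl_def petersen_E_def petersen_E0_def
  by code_simp

definition good :: "(bool \<times> nat) list \<Rightarrow> bool" where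
  "good vs \<longleftrightarrow> (\<exists>c. is_cycle petersen_V petersen_E c \<and> in_cyclic_order vs c)"

definition aut :: "(bool \<times> nat \<Rightarrow> bool \<times> nat) \<Rightarrow> bool" where
  "aut f \<longleftrightarrow> (\<forall>v\<in>petersen_V. f v \<in> petersen_V) \<and> inj_on f petersen_V \<and>
     (\<forall>u v. petersen_E u v \<longrightarrow> petersen_E (f u) (f v))"

lemma aut_good:
  assumes "aut f" "good vs" shows "good (map f vs)"
proof -
  obtain c where c: "is_cycle petersen_V petersen_E c" "in_cyclic_order vs c"
    using assms(2) unfolding good_def by blast
  have A1: "\<forall>v\<in>petersen_V. f v \<in> petersen_V" and A2: "inj_on f petersen_V"
     and A3: "\<And>u v. petersen_E u v \<Longrightarrow> petersen_E (f u) (f v)"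
    using assms(1) unfolding aut_def by blast+
  have c3: "length c \<ge> 3" and cd: "distinct c" and sc: "set c \<subseteq> petersen_V"
    and ce: "\<And>i. i < length c \<Longrightarrow> petersen_E (c ! i) (c ! ((i + 1) mod length c))"
    using c(1) unfolding is_cycle_def by blast+
  have "is_cycle petersen_V petersen_E (map f c)"
    unfolding is_cycle_def
  proof (intro conjI allI impI)
    show "3 \<le> length (map f c)" using c3 by simp
    have "inj_on f (set c)" using A2 sc by (rule inj_on_subset)
    then show "distinct (map f c)" using cd by (simp add: distinct_map)
    show "set (map f c) \<subseteq> petersen_V" using sc A1 by auto
  next
    fix i assume i: "i < length (map f c)"
    then have i': "i < length c" by simp
    have pos: "0 < length c" using i' by (cases c) auto
    have m: "(i + 1) mod length c < length c" using pos by (rule mod_less_divisor)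
    have "petersen_E (f (c ! i)) (f (c ! ((i + 1) mod length c)))"
      using ce[OF i'] by (rule A3)
    then show "petersen_E (map f c ! i) (map f c ! ((i + 1) mod length (map f c)))"
      using i' m by (simp only: nth_map length_map)
  qed
  moreover have "in_cyclic_order (map f vs) (map f c)"
  proof -
    obtain r where r: "r < length c" "subseq vs (rotate r c)"
      using c(2) unfolding in_cyclic_order_def by blast
    have "subseq (map f vs) (map f (rotate r c))" using r(2) by (rule subseq_map)
    then have "subseq (map f vs) (rotate r (map f c))" by (simp only: rotate_map)
    then show ?thesis unfolding in_cyclic_order_def using r(1) by auto
  qed
  ultimately show ?thesis unfolding good_def by blast
qed

definition rot :: "nat \<Rightarrow> bool \<times> nat \<Rightarrow> bool \<times> nat" where
  "rot k v = (fst v, (snd v + k) mod 5)"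

definition sig :: "bool \<times> nat \<Rightarrow> bool \<times> nat" where
  "sig v = (\<not> fst v, (2 * snd v) mod 5)"

definition sig' :: "bool \<times> nat \<Rightarrow> bool \<times> nat" where
  "sig' v = (\<not> fst v, (3 * snd v) mod 5)"

lemma aut_I:
  assumes "\<forall>v\<in>set Vl. f v \<in> set Vl"
    "\<forall>u\<in>set Vl. \<forall>v\<in>set Vl. f u = f v \<longrightarrow> u = v"
    "\<forall>u\<in>set Vl. \<forall>v\<in>set Vl. petersen_E u v \<longrightarrow> petersen_E (f u) (f v)"
  shows "aut f"
  unfolding aut_def
proof (intro conjI)
  show "\<forall>v\<in>petersen_V. f v \<in> petersen_V" using assms(1) unfolding Vl_eq by blast
  show "inj_on f petersen_V" unfolding inj_on_def using assms(2) unfolding Vl_eq by blast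
  show "\<forall>u v. petersen_E u v \<longrightarrow> petersen_E (f u) (f v)"
  proof (intro allI impI)
    fix u v assume e: "petersen_E u v"
    then have "u \<in> set Vl" "v \<in> set Vl" using E_V unfolding Vl_eq by blast+
    then show "petersen_E (f u) (f v)" using assms(3) e by blast
  qed
qed

lemma aut_comp:
  assumes "aut f" "aut g" shows "aut (f \<circ> g)"
proof -
  have f1: "\<forall>v\<in>petersen_V. f v \<in> petersen_V" and f2: "inj_on f petersen_V"
     and f3: "\<And>u v. petersen_E u v \<Longrightarrow> petersen_E (f u) (f v)"
    using assms(1) unfolding aut_def by blast+
  have g1: "\<forall>v\<in>petersen_V. g v \<in> petersen_V" and g2: "inj_on g petersen_V"
     and g3: "\<And>u v. petersen_E u v \<Longrightarrow> petersen_E (g u) (g v)"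
    using assms(2) unfolding aut_def by blast+
  have "g ` petersen_V \<subseteq> petersen_V" using g1 by blast
  then have "inj_on f (g ` petersen_V)" by (rule inj_on_subset[OF f2])
  then have "inj_on (f \<circ> g) petersen_V" using g2 by (simp add: comp_inj_on)
  moreover have "\<forall>v\<in>petersen_V. (f \<circ> g) v \<in> petersen_V" using f1 g1 by simp
  moreover have "\<forall>u v. petersen_E u v \<longrightarrow> petersen_E ((f \<circ> g) u) ((f \<circ> g) v)"
    using f3 g3 by simp
  ultimately show ?thesis unfolding aut_def by blast
qed

lemma rot_E0: "petersen_E u v \<Longrightarrow> petersen_E (rot k u) (rot k v)"
  unfolding petersen_E_def petersen_E0_def rot_def
  by (cases u; cases v) (auto split: bool.splits simp: mod_simps)

lemma rot_inj0: "\<forall>k\<in>set [0,1,2,3,4,5]. \<forall>u\<in>set Vl. \<forall>v\<in>set Vl. rot k u = rot k v \<longrightarrow> u = v"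
  by (simp add: Vl_def rot_def)

lemma rot_V0: "\<forall>k\<in>set [0,1,2,3,4,5]. \<forall>v\<in>set Vl. rot k v \<in> set Vl"
  by (simp add: Vl_def rot_def)

lemma aut_rot: assumes "k \<le> 5" shows "aut (rot k)"
proof -
  have k: "k \<in> set [0,1,2,3,4,5]" using assms by (auto simp: le_Suc_eq numeral_eq_Suc)
  show ?thesis
  proof (rule aut_I)
    show "\<forall>v\<in>set Vl. rot k v \<in> set Vl" using rot_V0 k by blast
    show "\<forall>u\<in>set Vl. \<forall>v\<in>set Vl. rot k u = rot k v \<longrightarrow> u = v" using rot_inj0 k by blast
    show "\<forall>u\<in>set Vl. \<forall>v\<in>set Vl. petersen_E u v \<longrightarrow> petersen_E (rot k u) (rot k v)"
      using rot_E0 by blast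
  qed
qed

lemma aut_sig: "aut sig"
proof (rule aut_I)
  show "\<forall>v\<in>set Vl. sig v \<in> set Vl" by (simp add: Vl_def sig_def)
  show "\<forall>u\<in>set Vl. \<forall>v\<in>set Vl. sig u = sig v \<longrightarrow> u = v" by (simp add: Vl_def sig_def)
  show "\<forall>u\<in>set Vl. \<forall>v\<in>set Vl. petersen_E u v \<longrightarrow> petersen_E (sig u) (sig v)"
    by (simp add: Vl_def petersen_E_def petersen_E0_def sig_def)
qed

lemma aut_sig': "aut sig'"
proof (rule aut_I)
  show "\<forall>v\<in>set Vl. sig' v \<in> set Vl" by (simp add: Vl_def sig'_def)
  show "\<forall>u\<in>set Vl. \<forall>v\<in>set Vl. sig' u = sig' v \<longrightarrow> u = v" by (simp add: Vl_def sig'_def)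
  show "\<forall>u\<in>set Vl. \<forall>v\<in>set Vl. petersen_E u v \<longrightarrow> petersen_E (sig' u) (sig' v)"
    by (simp add: Vl_def petersen_E_def petersen_E0_def sig'_def)
qed

lemma inv_rot: "\<forall>k\<in>set [0,1,2,3,4]. \<forall>v\<in>set Vl. rot k (rot (5 - k) v) = v"
  by (simp add: Vl_def rot_def)

lemma inv_sig: "\<forall>k\<in>set [0,1,2,3,4]. \<forall>v\<in>set Vl. (rot k \<circ> sig') ((sig \<circ> rot (5 - k)) v) = v"
  by (simp add: Vl_def sig_def sig'_def rot_def)

lemma to0: "\<forall>k\<in>set [0,1,2,3,4]. rot (5 - k) (True, k) = (True, 0) \<and> (sig \<circ> rot (5 - k)) (False, k) = (True, 0)"
  by (simp add: rot_def sig_def)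

lemma good0:
  assumes "distinct [(True,0),x,y,z]" "x \<in> petersen_V" "y \<in> petersen_V" "z \<in> petersen_V"
  shows "good [(True,0),x,y,z]"
proof -
  have "x \<in> set Vl" "y \<in> set Vl" "z \<in> set Vl" using assms(2-4) by (simp_all only: Vl_eq)
  then have "\<exists>c\<in>set W. sq [(True,0),x,y,z] c" using comp_cover assms(1) by blast
  then obtain c where c: "c \<in> set W" "sq [(True,0),x,y,z] c" by blast
  have "is_cycle petersen_V petersen_E c" using W_cyc c(1) by blast
  moreover have "in_cyclic_order [(True,0),x,y,z] c"
  proof -
    have "length c \<ge> 3" using calculation unfolding is_cycle_def by blast
    then have "0 < length c" by linarith
    moreover have "subseq [(True,0),x,y,z] (rotate 0 c)" using sq_subseq[OF c(2)] by simp
    ultimately show ?thesis unfolding in_cyclic_order_def by (intro exI[of _ 0]) simp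
  qed
  ultimately show ?thesis unfolding good_def by blast
qed

theorem theorem2p5:
  shows "k_ordered 4 petersen_V petersen_E"
  unfolding k_ordered_def
proof (intro allI impI, elim conjE)
  fix vs :: "(bool \<times> nat) list"
  assume len: "length vs = 4" and dis: "distinct vs" and sub: "set vs \<subseteq> petersen_V"
  obtain a x y z where vs: "vs = [a,x,y,z]" using len
    by (cases vs rule: remdups_adj.cases) (auto simp: numeral_eq_Suc length_Suc_conv)
  obtain g h where aut: "aut g" "aut h" and hg: "\<forall>v\<in>petersen_V. h (g v) = v"
    and ga: "g a = (True,0)"
  proof -
    from sub vs obtain b k where a: "a = (b,k)" "k < 5" by (cases a) (auto simp: petersen_V_def)
    then have k: "k \<in> set [0,1,2,3,4]" by (auto simp: less_Suc_eq numeral_eq_Suc)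
    show ?thesis
    proof (cases b)
      case True
      show ?thesis
        apply (rule that[of "rot (5 - k)" "rot k"])
        using aut_rot a k inv_rot[rule_format, OF k] to0[rule_format, OF k] True Vl_eq by auto
    next
      case False
      show ?thesis
        apply (rule that[of "sig \<circ> rot (5 - k)" "rot k \<circ> sig'"])
        using aut_rot a k inv_sig[rule_format, OF k] to0[rule_format, OF k] False Vl_eq
          aut_comp aut_sig aut_sig' by auto
    qed
  qed
  have gV: "\<forall>v\<in>petersen_V. g v \<in> petersen_V" and gi: "inj_on g petersen_V"
    using aut(1) aut_def by auto
  have "distinct (map g vs)" using dis gi sub by (simp add: distinct_map inj_on_subset)
  then have "good [(True,0), g x, g y, g z]"
    using good0 vs ga sub gV by auto
  then have "good (map h [(True,0), g x, g y, g z])" by (rule aut_good[OF aut(2)])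
  moreover have "[(True,0), g x, g y, g z] = map g vs" using vs ga by simp
  ultimately have "good (map h (map g vs))" by simp
  moreover have "map h (map g vs) = vs" using hg sub by (induction vs) auto
  ultimately show "\<exists>c. is_cycle petersen_V petersen_E c \<and> in_cyclic_order vs c"
    unfolding good_def by simp
qed

end
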